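(* In the setting of the context, write $A_1=\mathrm{SYM}$, $A_2=\mathrm{SR}$, $A_3=\mathrm{SUPP}$, $A_4=\mathrm{LF}$, $A_5=\mathrm{M}$, and $U_1=U_3=U_4=\Lambda_1=\Lambda_3=\Lambda_4=\mathbb{C}^N$. Suppose: (a) $U_2$ is a neighborhood of a point $x_2\in A_2$ such that $P_{A_2}$ is pointwise $\alpha$-firmly nonexpansive with $\alpha=1/2$ on $U_2$ at each point of $\Lambda_2:=P_{A_2}^{-1}(A_2\cap U_2)\cap U_2$; and $U_5$ is a neighborhood of a point $x_5\in A_5$ such that $A_5$ is $\epsilon$-super-regular at a distance at $x_5$ relative to $\Lambda_5:=P_{A_5}^{-1}(A_5\cap U_5)\cap U_5$ with constant $\epsilon_{U_5}$ on $U_5$. Then: (i) if moreover $\epsilon_{U_5}\in[0,4\sqrt2/7-5/7)$, then for $j=1,\dots,5$ the reflector $R_{A_j}$ is pointwise almost nonexpansive with violation $\tilde\epsilon_j$ at each point of $\Lambda_j$ on $U_j$, where $\tilde\epsilon_1=\tilde\epsilon_2=\tilde\epsilon_3=\tilde\epsilon_4=0$ and $\tilde\epsilon_5=8\epsilon_{U_5}(1+\epsilon_{U_5})/(1-\epsilon_{U_5})^2$; (ii) if moreover $\epsilon_{U_5}\in[0,2\sqrt3/3-1)$, then for $j=1,\dots,5$ the projector $P_{A_j}$ is pointwise almost $\alpha$-firmly nonexpansive with constant $\alpha_j=1/2$ and violation $\check\epsilon_j$ at each point of $\Lambda_j$ on $U_j$, where $\check\epsilon_1=\check\epsilon_2=\check\epsilon_3=\check\epsilon_4=0$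 and $\check\epsilon_5=4\epsilon_{U_5}(1+\epsilon_{U_5})/(1-\epsilon_{U_5})^2$.
   Context: Let $N=N_xN_yN_z$; vectors $u\in\mathbb{C}^N$ are arrays indexed by $\mathbb I=\{1,\dots,N_x\}\times\{1,\dots,N_y\}\times\{1,\dots,N_z\}$; $\mathbb{C}^N\cong\mathbb{R}^{2N}$ carries the real inner product $\langle x,y\rangle=\mathrm{Re}\sum_k\overline{x_k}y_k$ and Euclidean norm. Let $\mathcal F:\mathbb{C}^N\to\mathbb{C}^{\widehat N}$ be the discrete Fourier transform, $\widehat u=\mathcal Fu$, entries indexed by $\widehat{\mathbb I}$ with grid points $(\hat x_i,\hat y_j,\hat z_l)\in\mathbb{R}^3$. Given: $\mathbb S\subset\widehat{\mathbb I}$, data $b_{(i,j,l)}\ge0$ for $(i,j,l)\in\mathbb S$, a ball $B_{\bar r}\subset\mathbb{R}^3$, a symmetric binary mask $\omega\in\{0,1\}^N$, an integer $s>0$. Sets: $\mathrm{M}=\{u: |\widehat u_{(i,j,l)}|=b_{(i,j,l)}\ \forall (i,j,l)\in\mathbb S\}$; $\mathrm{LF}=\{u: \widehat u_{(i,j,l)}=0 \text{ whenever } (\hat x_i,\hat y_j,\hat z_l)\notin B_{\bar r}\}$; $\mathrm{SUPP}=\{u:\omega_{(i,j,l)}u_{(i,j,l)}=u_{(i,j,l)}\ \forall(i,j,l)\}$; $\mathrm{SR}=\{u:\|u\|_0\le s,\ \mathrm{Im}(u)=0\}$ ($\|u\|_0$ = number of nonzero entries); $\mathrm{SYM}=\{u: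 u_{(i,j,l)}=u_{(N_x-i+1,j,l)}=-u_{(i,N_y-j+1,l)}=-u_{(i,j,N_z-l+1)}\ \forall(i,j,l)\}$. For closed nonempty $A$: $P_Ax=\operatorname{argmin}_{a\in A}\|a-x\|$ (possibly set-valued), $R_A=2P_A-\mathrm{Id}$, and $P_A^{-1}(S)=\{x: P_Ax\cap S\neq\emptyset\}$. Proximal normal cone: $N^P_A(a)=\mathrm{cone}(P_A^{-1}(a)-a)$ for $a\in A$. $\epsilon$-super-regularity at a distance: a set $\Omega$ is $\epsilon$-super-regular at a distance relative to $\Lambda$ at $\bar x$ with constant $\epsilon_U$ on the open set $U\ni\bar x$ if $\langle v-(y'-y),\,y-x\rangle\le\epsilon_U\|v-(y'-y)\|\,\|y-x\|$ for all $y'\in U\cap\Lambda$, all $y\in P_\Omega(y')$, and all $(x,v)$ with $v\in N^P_\Omega(x)$, $x+v\in U$, $x\in P_\Omega(x+v)$. A map $T$ is pointwise almost nonexpansive at $y$ on $U$ with violation $\epsilon\in[0,1)$ if $\|x^+-y^+\|\le\sqrt{1+\epsilon}\|x-y\|$ for all $x\in U$, $x^+\in Tx$, $y^+\in Ty$; pointwise almost $\alpha$-firmly nonexpansive ($\alpha\in(0,1)$) at $y$ on $U$ with violation $\epsilon\in[0,1)$ if $\|x^+-y^+\|^2\le(1+\epsilon)\|x-y\|^2-\frac{1-\alpha}{\alpha}\|(x^+-x)-(y^+-y)\|^2$ for all such $x,x^+,y^+$; "$\alpha$-firmly nonexpansive" means violation $0$. *)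

theory Defs
  imports "HOL-Analysis.Analysis"
begin

type_synonym idx = "nat \<times> nat \<times> nat"
type_synonym cvec = "idx \<Rightarrow> complex"

definition Idx :: "nat \<Rightarrow> nat \<Rightarrow> nat \<Rightarrow> idx set" where
  "Idx a b c = {1..a} \<times> {1..b} \<times> {1..c}"

text \<open>The space C^N: arrays indexed by I (zero outside I).\<close>
definition Vsp :: "idx set \<Rightarrow> cvec set" where
  "Vsp I = {u. \<forall>k. k \<notin> I \<longrightarrow> u k = 0}"

definition vadd :: "cvec \<Rightarrow> cvec \<Rightarrow> cvec" where "vadd x y = (\<lambda>k. x k + y k)"
definition vsub :: "cvec \<Rightarrow> cvec \<Rightarrow> cvec" where "vsub x y = (\<lambda>k. x k - y k)"
definition vscale :: "real \<Rightarrow> cvec \<Rightarrow> cvec" where "vscale t x = (\<lambda>k. complex_of_real t * x k)"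

text \<open>Real inner product and Euclidean norm on C^N = R^(2N).\<close>
definition vinner :: "idx set \<Rightarrow> cvec \<Rightarrow> cvec \<Rightarrow> real" where
  "vinner I x y = Re (\<Sum>k\<in>I. cnj (x k) * y k)"
definition vnorm :: "idx set \<Rightarrow> cvec \<Rightarrow> real" where
  "vnorm I x = sqrt (\<Sum>k\<in>I. (cmod (x k))^2)"

definition proj :: "idx set \<Rightarrow> cvec set \<Rightarrow> cvec \<Rightarrow> cvec set" where
  "proj I A x = {a \<in> A. \<forall>b\<in>A. vnorm I (vsub a x) \<le> vnorm I (vsub b x)}"
definition reflector :: "idx set \<Rightarrow> cvec set \<Rightarrow> cvec \<Rightarrow> cvec set" where
  "reflector I A x = {vsub (vscale 2 a) x | a. a \<in> proj I A x}"
definition proj_inv :: "idx set \<Rightarrow> cvec set \<Rightarrow> cvec set \<Rightarrow> cvec set" where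
  "proj_inv I A S = {x \<in> Vsp I. proj I A x \<inter> S \<noteq> {}}"
definition prox_normal :: "idx set \<Rightarrow> cvec set \<Rightarrow> cvec \<Rightarrow> cvec set" where
  "prox_normal I A a = {vscale t (vsub y a) | t y. 0 \<le> t \<and> y \<in> proj_inv I A {a}}"

definition open_V :: "idx set \<Rightarrow> cvec set \<Rightarrow> bool" where
  "open_V I U \<longleftrightarrow> U \<subseteq> Vsp I \<and>
     (\<forall>x\<in>U. \<exists>e>0. \<forall>y\<in>Vsp I. vnorm I (vsub y x) < e \<longrightarrow> y \<in> U)"

definition super_regular_dist ::
  "idx set \<Rightarrow> cvec set \<Rightarrow> cvec set \<Rightarrow> cvec \<Rightarrow> real \<Rightarrow> cvec set \<Rightarrow> bool" where
  "super_regular_dist I Om Lam xbar eps U \<longleftrightarrow> open_V I U \<and> xbar \<in> U \<and>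
     (\<forall>y'\<in>U \<inter> Lam. \<forall>y\<in>proj I Om y'. \<forall>x v.
        x \<in> Vsp I \<and> v \<in> prox_normal I Om x \<and> vadd x v \<in> U \<and> x \<in> proj I Om (vadd x v) \<longrightarrow>
        vinner I (vsub v (vsub y' y)) (vsub y x)
          \<le> eps * vnorm I (vsub v (vsub y' y)) * vnorm I (vsub y x))"

definition pw_almost_nonexp ::
  "idx set \<Rightarrow> (cvec \<Rightarrow> cvec set) \<Rightarrow> cvec \<Rightarrow> cvec set \<Rightarrow> real \<Rightarrow> bool" where
  "pw_almost_nonexp I T y U eps \<longleftrightarrow> 0 \<le> eps \<and> eps < 1 \<and>
     (\<forall>x\<in>U. \<forall>xp\<in>T x. \<forall>yp\<in>T y.
        vnorm I (vsub xp yp) \<le> sqrt (1 + eps) * vnorm I (vsub x y))"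

definition pw_almost_afne ::
  "idx set \<Rightarrow> (cvec \<Rightarrow> cvec set) \<Rightarrow> cvec \<Rightarrow> cvec set \<Rightarrow> real \<Rightarrow> real \<Rightarrow> bool" where
  "pw_almost_afne I T y U alpha eps \<longleftrightarrow> 0 < alpha \<and> alpha < 1 \<and> 0 \<le> eps \<and> eps < 1 \<and>
     (\<forall>x\<in>U. \<forall>xp\<in>T x. \<forall>yp\<in>T y.
        (vnorm I (vsub xp yp))^2 \<le> (1 + eps) * (vnorm I (vsub x y))^2
          - (1 - alpha) / alpha * (vnorm I (vsub (vsub xp x) (vsub yp y)))^2)"

definition dft :: "nat \<Rightarrow> nat \<Rightarrow> nat \<Rightarrow> nat \<Rightarrow> nat \<Rightarrow> nat \<Rightarrow> cvec \<Rightarrow> cvec" where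
  "dft Nx Ny Nz Mx My Mz u = (\<lambda>(k1, k2, k3).
     if (k1, k2, k3) \<in> Idx Mx My Mz then
       (\<Sum>(i, j, l)\<in>Idx Nx Ny Nz. u (i, j, l) *
          cis (- 2 * pi * (real (i - 1) * real (k1 - 1) / real Mx
                         + real (j - 1) * real (k2 - 1) / real My
                         + real (l - 1) * real (k3 - 1) / real Mz)))
     else 0)"

definition setM :: "idx set \<Rightarrow> (cvec \<Rightarrow> cvec) \<Rightarrow> idx set \<Rightarrow> (idx \<Rightarrow> real) \<Rightarrow> cvec set" where
  "setM I F S b = {u \<in> Vsp I. \<forall>k\<in>S. cmod (F u k) = b k}"

definition setLF :: "idx set \<Rightarrow> (cvec \<Rightarrow> cvec) \<Rightarrow> idx set \<Rightarrow> (idx \<Rightarrow> real^3)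
     \<Rightarrow> (real^3) set \<Rightarrow> cvec set" where
  "setLF I F Ihat gp B = {u \<in> Vsp I. \<forall>k\<in>Ihat. gp k \<notin> B \<longrightarrow> F u k = 0}"

definition setSUPP :: "idx set \<Rightarrow> (idx \<Rightarrow> real) \<Rightarrow> cvec set" where
  "setSUPP I \<omega> = {u \<in> Vsp I. \<forall>k\<in>I. complex_of_real (\<omega> k) * u k = u k}"

definition setSR :: "idx set \<Rightarrow> nat \<Rightarrow> cvec set" where
  "setSR I s = {u \<in> Vsp I. card {k \<in> I. u k \<noteq> 0} \<le> s \<and> (\<forall>k\<in>I. Im (u k) = 0)}"

definition setSYM :: "nat \<Rightarrow> nat \<Rightarrow> nat \<Rightarrow> cvec set" where
  "setSYM Nx Ny Nz = {u \<in> Vsp (Idx Nx Ny Nz). \<forall>i j l. (i, j, l) \<in> Idx Nx Ny Nz \<longrightarrow>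
      u (i, j, l) = u (Nx - i + 1, j, l) \<and>
      u (i, j, l) = - u (i, Ny - j + 1, l) \<and>
      u (i, j, l) = - u (i, j, Nz - l + 1)}"

end

theory Submission
  imports Defs
begin


lemma vinner_eq: "vinner I x y = (\<Sum>k\<in>I. Re (x k) * Re (y k) + Im (x k) * Im (y k))"
  unfolding vinner_def by (simp add: Re_sum)

lemma vnorm_sq: "(vnorm I x)^2 = vinner I x x"
proof -
  have "(\<Sum>k\<in>I. (cmod (x k))^2) \<ge> 0" by (simp add: sum_nonneg)
  then show ?thesis unfolding vnorm_def vinner_eq cmod_power2
    by (simp add: power2_eq_square)
qed

lemma vnorm_nonneg: "0 \<le> vnorm I x"
  unfolding vnorm_def by (simp add: sum_nonneg)

lemma vinner_sym: "vinner I x y = vinner I y x"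
  unfolding vinner_eq by (simp add: algebra_simps)

lemma vinner_lin:
  assumes "\<forall>k\<in>I. f k = complex_of_real s * p k + complex_of_real t * q k"
  shows "vinner I f g = s * vinner I p g + t * vinner I q g"
proof -
  have "vinner I f g = (\<Sum>k\<in>I. s * (Re (p k) * Re (g k) + Im (p k) * Im (g k))
          + t * (Re (q k) * Re (g k) + Im (q k) * Im (g k)))"
    unfolding vinner_eq using assms by (intro sum.cong) (auto simp: algebra_simps)
  also have "\<dots> = s * vinner I p g + t * vinner I q g"
    unfolding vinner_eq by (simp add: sum.distrib sum_distrib_left distrib_left)
  finally show ?thesis .
qed

lemma vnorm_lin:
  assumes "\<forall>k\<in>I. f k = complex_of_real s * p k + complex_of_real t * q k"
  shows "(vnorm I f)^2 = s^2 * (vnorm I p)^2 + 2 * s * t * vinner I p q + t^2 * (vnorm I q)^2"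
proof -
  have "(vnorm I f)^2 = s * vinner I p f + t * vinner I q f"
    unfolding vnorm_sq using vinner_lin[OF assms] .
  also have "vinner I p f = s * vinner I p p + t * vinner I p q"
    using vinner_lin[OF assms, of p] vinner_sym by metis
  also have "vinner I q f = s * vinner I q p + t * vinner I q q"
    using vinner_lin[OF assms, of q] vinner_sym by metis
  finally show ?thesis unfolding vnorm_sq using vinner_sym[of I p q]
    by (simp add: algebra_simps power2_eq_square)
qed



lemma sq_le_imp_le: "(a::real)^2 \<le> b^2 \<Longrightarrow> 0 \<le> b \<Longrightarrow> a \<le> b"
  using power2_le_imp_le by blast

lemma firm_refl:
  assumes afne: "pw_almost_afne I (proj I A) y U (1/2) 0"
  shows "pw_almost_nonexp I (reflector I A) y U 0"
  unfolding pw_almost_nonexp_def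
proof (intro conjI ballI)
  fix x xr yr assume x: "x \<in> U" and xr: "xr \<in> reflector I A x" and yr: "yr \<in> reflector I A y"
  obtain a where a: "a \<in> proj I A x" and xr': "xr = vsub (vscale 2 a) x"
    using xr unfolding reflector_def by blast
  obtain b where b: "b \<in> proj I A y" and yr': "yr = vsub (vscale 2 b) y"
    using yr unfolding reflector_def by blast
  have h: "(vnorm I (vsub a b))^2 \<le> (1 + 0) * (vnorm I (vsub x y))^2
          - (1 - 1/2) / (1/2) * (vnorm I (vsub (vsub a x) (vsub b y)))^2"
    using afne x a b unfolding pw_almost_afne_def by blast
  have e1: "(vnorm I (vsub (vsub a x) (vsub b y)))^2 = 1^2 * (vnorm I (vsub a b))^2
      + 2 * 1 * (-1) * vinner I (vsub a b) (vsub x y) + (-1)^2 * (vnorm I (vsub x y))^2"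
    by (rule vnorm_lin) (simp add: vsub_def)
  have e2: "(vnorm I (vsub xr yr))^2 = 2^2 * (vnorm I (vsub a b))^2
      + 2 * 2 * (-1) * vinner I (vsub a b) (vsub x y) + (-1)^2 * (vnorm I (vsub x y))^2"
    unfolding xr' yr' by (rule vnorm_lin) (simp add: vsub_def vscale_def algebra_simps)
  have "(vnorm I (vsub xr yr))^2 \<le> (vnorm I (vsub x y))^2"
    using h e1 e2 by (simp add: power2_eq_square)
  then show "vnorm I (vsub xr yr) \<le> sqrt (1 + 0) * vnorm I (vsub x y)"
    using sq_le_imp_le[OF _ vnorm_nonneg] by simp
next show "(0::real) \<le> 0" by simp
next show "(0::real) < 1" by simp
qed

definition lin_closed :: "cvec set \<Rightarrow> bool" where
  "lin_closed A \<longleftrightarrow> (\<forall>u\<in>A. \<forall>z\<in>A. \<forall>t::real. (\<lambda>k. u k + complex_of_real t * z k) \<in> A)"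

lemma quad_zero:
  fixes c n :: real
  assumes n: "0 \<le> n" and h: "\<forall>t. 0 \<le> 2 * t * c + t^2 * n"
  shows "c = 0"
proof -
  define t where "t = - c / (n + 1)"
  have tt: "(n+1) * t = - c" unfolding t_def using n by simp
  have "0 \<le> (n+1)^2 * (2 * t * c + t^2 * n)" using h n by simp
  also have "\<dots> = 2 * c * (n+1) * ((n+1) * t) + ((n+1) * t)^2 * n"
    by (simp add: power2_eq_square algebra_simps)
  also have "\<dots> = - (c^2 * (n + 2))"
    unfolding tt by (simp add: power2_eq_square algebra_simps)
  finally have "c^2 * (n+2) \<le> 0" by simp
  then have "c^2 \<le> 0" using n by (simp add: mult_le_0_iff)
  then show ?thesis by simp
qed

lemma proj_orth:
  assumes lin: "lin_closed A" and a: "a \<in> proj I A x" and z: "z \<in> A"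
  shows "vinner I (vsub x a) z = 0"
proof -
  have aA: "a \<in> A" using a unfolding proj_def by blast
  have "\<forall>t. 0 \<le> 2 * t * vinner I (vsub a x) z + t^2 * (vnorm I z)^2"
  proof
    fix t :: real
    have m: "(\<lambda>k. a k + complex_of_real t * z k) \<in> A"
      using lin aA z unfolding lin_closed_def by blast
    have "vnorm I (vsub a x) \<le> vnorm I (vsub (\<lambda>k. a k + complex_of_real t * z k) x)"
      using a m unfolding proj_def by blast
    then have "(vnorm I (vsub a x))^2 \<le> (vnorm I (vsub (\<lambda>k. a k + complex_of_real t * z k) x))^2"
      using vnorm_nonneg by (simp add: power_mono)
    also have "\<dots> = 1^2 * (vnorm I (vsub a x))^2 + 2 * 1 * t * vinner I (vsub a x) z + t^2 * (vnorm I z)^2"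
      by (rule vnorm_lin) (simp add: vsub_def algebra_simps)
    finally show "0 \<le> 2 * t * vinner I (vsub a x) z + t^2 * (vnorm I z)^2" by simp
  qed
  then have "vinner I (vsub a x) z = 0" by (intro quad_zero) simp_all
  moreover have "vinner I (vsub x a) z = (-1) * vinner I (vsub a x) z + 0 * vinner I (vsub a x) z"
    by (rule vinner_lin) (simp add: vsub_def)
  ultimately show ?thesis by simp
qed

lemma subspace_afne:
  assumes lin: "lin_closed A"
  shows "pw_almost_afne I (proj I A) y U (1/2) 0"
  unfolding pw_almost_afne_def
proof (intro conjI ballI)
  fix x a b assume x: "x \<in> U" and a: "a \<in> proj I A x" and b: "b \<in> proj I A y"
  have aA: "a \<in> A" and bA: "b \<in> A" using a b unfolding proj_def by blast+
  have "(\<lambda>k. a k + complex_of_real (-1) * b k) \<in> A"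
    using lin aA bA unfolding lin_closed_def by blast
  moreover have "(\<lambda>k. a k + complex_of_real (-1) * b k) = vsub a b"
    by (simp add: vsub_def)
  ultimately have pA: "vsub a b \<in> A" by simp
  have o1: "vinner I (vsub x a) (vsub a b) = 0" by (rule proj_orth[OF lin a pA])
  have o2: "vinner I (vsub y b) (vsub a b) = 0" by (rule proj_orth[OF lin b pA])
  have ow: "vinner I (vsub (vsub x a) (vsub y b)) (vsub a b) = 1 * 0 + (-1) * 0"
    using vinner_lin[of I "vsub (vsub x a) (vsub y b)" 1 "vsub x a" "-1" "vsub y b" "vsub a b"] o1 o2
    by (simp add: vsub_def)
  have e1: "(vnorm I (vsub x y))^2 = 1^2 * (vnorm I (vsub a b))^2
      + 2 * 1 * 1 * vinner I (vsub a b) (vsub (vsub x a) (vsub y b)) + 1^2 * (vnorm I (vsub (vsub x a) (vsub y b)))^2"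
    by (rule vnorm_lin) (simp add: vsub_def)
  have e2: "(vnorm I (vsub (vsub a x) (vsub b y)))^2 = (-1)^2 * (vnorm I (vsub (vsub x a) (vsub y b)))^2
      + 2 * (-1) * 0 * vinner I (vsub (vsub x a) (vsub y b)) (vsub x y) + 0^2 * (vnorm I (vsub x y))^2"
    by (rule vnorm_lin) (simp add: vsub_def)
  show "(vnorm I (vsub a b))^2 \<le> (1 + 0) * (vnorm I (vsub x y))^2
          - (1 - 1/2) / (1/2) * (vnorm I (vsub (vsub a x) (vsub b y)))^2"
    using e1 e2 ow vinner_sym[of I "vsub a b"] by simp
qed simp_all



lemma core_arith:
  fixes e c na nw K ip :: real
  assumes e: "0 \<le> e" "e < 1" and nn: "0 \<le> na" "0 \<le> nw" and c: "0 \<le> c" "e \<le> c * (1 - e)"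
    and K: "K = na^2 + 2 * ip + nw^2" and ip: "- ip \<le> e * nw * na"
  shows "2 * e * (na * nw) \<le> c * K"
proof -
  define m where "m = na * nw"
  have m0: "0 \<le> m" unfolding m_def using nn by simp
  have "0 \<le> (na - nw)^2" by simp
  then have h1: "2 * m \<le> na^2 + nw^2" unfolding m_def by (simp add: power2_eq_square algebra_simps)
  have ip': "- ip \<le> e * m" using ip unfolding m_def by (simp add: algebra_simps)
  have h2: "2 * (1 - e) * m \<le> K" using h1 K ip' by (simp add: algebra_simps)
  have h3: "c * (2 * (1 - e) * m) \<le> c * K" using mult_left_mono[OF h2 c(1)] .
  have h4: "e * m \<le> c * (1 - e) * m" using mult_right_mono[OF c(2) m0] .
  show ?thesis using h3 h4 unfolding m_def[symmetric] by (simp add: algebra_simps)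
qed

lemma c_ge:
  fixes e :: real
  assumes e: "0 \<le> e" "e < 1"
  shows "e \<le> (4 * e * (1 + e) / (1 - e)^2) * (1 - e)"
proof -
  have p: "0 < 1 - e" using e by simp
  have eq: "(4 * e * (1 + e) / (1 - e)^2) * (1 - e) = 4 * e * (1 + e) / (1 - e)"
    using p by (simp add: power2_eq_square)
  have "e * (1 - e) \<le> 4 * e * (1 + e)" using e by (simp add: algebra_simps mult_left_mono)
  then have "e \<le> 4 * e * (1 + e) / (1 - e)" using p by (simp add: le_divide_eq)
  then show ?thesis using eq by simp
qed

lemma bound_afne:
  fixes e :: real
  assumes e: "0 \<le> e" "e < 2 * sqrt 3 / 3 - 1"
  shows "e < 1" "4 * e * (1 + e) / (1 - e)^2 < 1"
proof -
  have "sqrt 3 < sqrt (3^2)" by (subst real_sqrt_less_iff) simp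
  then have s3: "sqrt 3 < 3" by simp
  show e1: "e < 1" using e s3 by simp
  have "3 * (e + 1) < 2 * sqrt 3" using e by simp
  then have "(3 * (e + 1))^2 < (2 * sqrt 3)^2" using e by (intro power_strict_mono) simp_all
  then have "9 * (e+1)^2 < 12" by (simp add: power2_eq_square algebra_simps)
  then have "4 * e * (1 + e) < (1 - e)^2" by (simp add: power2_eq_square algebra_simps)
  then show "4 * e * (1 + e) / (1 - e)^2 < 1" using e1 by simp
qed

lemma bound_refl:
  fixes e :: real
  assumes e: "0 \<le> e" "e < 4 * sqrt 2 / 7 - 5 / 7"
  shows "e < 1" "8 * e * (1 + e) / (1 - e)^2 < 1"
proof -
  have "sqrt 2 < sqrt (3^2)" by (subst real_sqrt_less_iff) simp
  then have s3: "sqrt 2 < 3" by simp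
  show e1: "e < 1" using e s3 by simp
  have "7 * e + 5 < 4 * sqrt 2" using e by simp
  then have "(7 * e + 5)^2 < (4 * sqrt 2)^2" using e by (intro power_strict_mono) simp_all
  then have "(7 * e + 5)^2 < 32" by (simp add: power_mult_distrib)
  then have "8 * e * (1 + e) < (1 - e)^2" by (simp add: power2_eq_square algebra_simps)
  then show "8 * e * (1 + e) / (1 - e)^2 < 1" using e1 by simp
qed

lemma vnorm_swap: "vnorm I (vsub b a) = vnorm I (vsub a b)"
  unfolding vnorm_def vsub_def by (simp add: norm_minus_commute)

lemma sr_ineq:
  assumes sr: "super_regular_dist I A Lam xbar eps U" and yL: "y \<in> Lam" and LU: "Lam \<subseteq> U"
    and AV: "A \<subseteq> Vsp I" and x: "x \<in> U" and a: "a \<in> proj I A x" and b: "b \<in> proj I A y"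
  shows "- vinner I (vsub a b) (vsub (vsub x a) (vsub y b))
           \<le> eps * vnorm I (vsub (vsub x a) (vsub y b)) * vnorm I (vsub a b)"
proof -
  have UV: "U \<subseteq> Vsp I" using sr unfolding super_regular_dist_def open_V_def by blast
  have aA: "a \<in> A" using a unfolding proj_def by blast
  have xV: "x \<in> Vsp I" using x UV by blast
  have "x \<in> proj_inv I A {a}" unfolding proj_inv_def using xV a by blast
  then have "vscale 1 (vsub x a) \<in> prox_normal I A a" unfolding prox_normal_def by force
  moreover have "vscale 1 (vsub x a) = vsub x a" by (simp add: vscale_def)
  ultimately have v: "vsub x a \<in> prox_normal I A a" by simp
  have xa: "vadd a (vsub x a) = x" by (simp add: vadd_def vsub_def)
  have yU: "y \<in> U \<inter> Lam" using yL LU by blast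
  have "vinner I (vsub (vsub x a) (vsub y b)) (vsub b a)
          \<le> eps * vnorm I (vsub (vsub x a) (vsub y b)) * vnorm I (vsub b a)"
  proof -
    have all: "\<forall>y'\<in>U \<inter> Lam. \<forall>y\<in>proj I A y'. \<forall>x v.
        x \<in> Vsp I \<and> v \<in> prox_normal I A x \<and> vadd x v \<in> U \<and> x \<in> proj I A (vadd x v) \<longrightarrow>
        vinner I (vsub v (vsub y' y)) (vsub y x)
          \<le> eps * vnorm I (vsub v (vsub y' y)) * vnorm I (vsub y x)"
      using sr unfolding super_regular_dist_def by blast
    have cnd: "a \<in> Vsp I \<and> vsub x a \<in> prox_normal I A a \<and> vadd a (vsub x a) \<in> U \<and> a \<in> proj I A (vadd a (vsub x a))"
      using aA AV v xa x a by auto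
    show ?thesis using all[rule_format, OF yU b cnd] .
  qed
  moreover have "vinner I (vsub (vsub x a) (vsub y b)) (vsub b a)
      = vinner I (vsub b a) (vsub (vsub x a) (vsub y b))" by (rule vinner_sym)
  moreover have "vinner I (vsub b a) (vsub (vsub x a) (vsub y b))
      = (-1) * vinner I (vsub a b) (vsub (vsub x a) (vsub y b)) + 0 * vinner I (vsub a b) (vsub (vsub x a) (vsub y b))"
    by (rule vinner_lin) (simp add: vsub_def)
  ultimately show ?thesis using vnorm_swap by simp
qed



lemma sr_common:
  assumes sr: "super_regular_dist I A Lam xbar e U" and yL: "y \<in> Lam" and LU: "Lam \<subseteq> U"
    and AV: "A \<subseteq> Vsp I" and e: "0 \<le> e" "e < 1"
    and x: "x \<in> U" and a: "a \<in> proj I A x" and b: "b \<in> proj I A y"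
  shows "(vnorm I (vsub a b))^2 + (vnorm I (vsub (vsub x a) (vsub y b)))^2
           - 2 * vinner I (vsub a b) (vsub (vsub x a) (vsub y b))
         \<le> (1 + 2 * (4 * e * (1 + e) / (1 - e)^2)) * (vnorm I (vsub x y))^2"
    "(vnorm I (vsub a b))^2 + (vnorm I (vsub (vsub x a) (vsub y b)))^2
         \<le> (1 + 4 * e * (1 + e) / (1 - e)^2) * (vnorm I (vsub x y))^2"
proof -
  define c where "c = 4 * e * (1 + e) / (1 - e)^2"
  define na where "na = vnorm I (vsub a b)"
  define nw where "nw = vnorm I (vsub (vsub x a) (vsub y b))"
  define ip where "ip = vinner I (vsub a b) (vsub (vsub x a) (vsub y b))"
  define K where "K = (vnorm I (vsub x y))^2"
  have c0: "0 \<le> c" unfolding c_def using e by simp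
  have ce: "e \<le> c * (1 - e)" unfolding c_def using c_ge[OF e] .
  have Keq: "K = 1^2 * na^2 + 2 * 1 * 1 * ip + 1^2 * nw^2"
    unfolding K_def na_def nw_def ip_def by (rule vnorm_lin) (simp add: vsub_def)
  have ipi: "- ip \<le> e * nw * na"
    unfolding ip_def nw_def na_def by (rule sr_ineq[OF sr yL LU AV x a b])
  have core: "2 * e * (na * nw) \<le> c * K"
    by (rule core_arith[OF e _ _ c0 ce _ ipi]) (simp_all add: na_def nw_def vnorm_nonneg Keq)
  have "0 \<le> e * (na * nw)" using e by (simp add: na_def nw_def vnorm_nonneg)
  then show "na^2 + nw^2 - 2 * ip \<le> (1 + 2 * c) * K" 
    "na^2 + nw^2 \<le> (1 + c) * K"
    using Keq ipi core by (simp_all add: algebra_simps)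
qed

lemma sr_afne:
  assumes sr: "super_regular_dist I A Lam xbar e U" and yL: "y \<in> Lam" and LU: "Lam \<subseteq> U"
    and AV: "A \<subseteq> Vsp I" and e: "0 \<le> e" "e < 2 * sqrt 3 / 3 - 1"
  shows "pw_almost_afne I (proj I A) y U (1/2) (4 * e * (1 + e) / (1 - e)^2)"
  unfolding pw_almost_afne_def
proof (intro conjI ballI)
  have e1: "e < 1" and cb: "4 * e * (1 + e) / (1 - e)^2 < 1" using bound_afne[OF e] by auto
  show "0 \<le> 4 * e * (1 + e) / (1 - e)^2" using e by simp
  show "4 * e * (1 + e) / (1 - e)^2 < 1" by (rule cb)
  fix x a b assume x: "x \<in> U" and a: "a \<in> proj I A x" and b: "b \<in> proj I A y"
  have h: "(vnorm I (vsub a b))^2 + (vnorm I (vsub (vsub x a) (vsub y b)))^2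
         \<le> (1 + 4 * e * (1 + e) / (1 - e)^2) * (vnorm I (vsub x y))^2"
    by (rule sr_common(2)[OF sr yL LU AV e(1) e1 x a b])
  have w: "(vnorm I (vsub (vsub a x) (vsub b y)))^2 = (-1)^2 * (vnorm I (vsub (vsub x a) (vsub y b)))^2
      + 2 * (-1) * 0 * vinner I (vsub (vsub x a) (vsub y b)) (vsub x y) + 0^2 * (vnorm I (vsub x y))^2"
    by (rule vnorm_lin) (simp add: vsub_def)
  show "(vnorm I (vsub a b))^2 \<le> (1 + 4 * e * (1 + e) / (1 - e)^2) * (vnorm I (vsub x y))^2
          - (1 - 1/2) / (1/2) * (vnorm I (vsub (vsub a x) (vsub b y)))^2"
    using h w by simp
qed simp_all

lemma sr_refl:
  assumes sr: "super_regular_dist I A Lam xbar e U" and yL: "y \<in> Lam" and LU: "Lam \<subseteq> U"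
    and AV: "A \<subseteq> Vsp I" and e: "0 \<le> e" "e < 4 * sqrt 2 / 7 - 5 / 7"
  shows "pw_almost_nonexp I (reflector I A) y U (8 * e * (1 + e) / (1 - e)^2)"
  unfolding pw_almost_nonexp_def
proof (intro conjI ballI)
  have e1: "e < 1" and cb: "8 * e * (1 + e) / (1 - e)^2 < 1" using bound_refl[OF e] by auto
  show "0 \<le> 8 * e * (1 + e) / (1 - e)^2" using e by simp
  show "8 * e * (1 + e) / (1 - e)^2 < 1" by (rule cb)
  fix x xr yr assume x: "x \<in> U" and xr: "xr \<in> reflector I A x" and yr: "yr \<in> reflector I A y"
  obtain a where a: "a \<in> proj I A x" and xr': "xr = vsub (vscale 2 a) x"
    using xr unfolding reflector_def by blast
  obtain b where b: "b \<in> proj I A y" and yr': "yr = vsub (vscale 2 b) y"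
    using yr unfolding reflector_def by blast
  have h: "(vnorm I (vsub a b))^2 + (vnorm I (vsub (vsub x a) (vsub y b)))^2
           - 2 * vinner I (vsub a b) (vsub (vsub x a) (vsub y b))
         \<le> (1 + 2 * (4 * e * (1 + e) / (1 - e)^2)) * (vnorm I (vsub x y))^2"
    by (rule sr_common(1)[OF sr yL LU AV e(1) e1 x a b])
  have r: "(vnorm I (vsub xr yr))^2 = 1^2 * (vnorm I (vsub a b))^2
      + 2 * 1 * (-1) * vinner I (vsub a b) (vsub (vsub x a) (vsub y b)) + (-1)^2 * (vnorm I (vsub (vsub x a) (vsub y b)))^2"
    unfolding xr' yr' by (rule vnorm_lin) (simp add: vsub_def vscale_def algebra_simps)
  have c8: "1 + 2 * (4 * e * (1 + e) / (1 - e)^2) = 1 + 8 * e * (1 + e) / (1 - e)^2" by simp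
  have h': "(vnorm I (vsub a b))^2 + (vnorm I (vsub (vsub x a) (vsub y b)))^2
           - 2 * vinner I (vsub a b) (vsub (vsub x a) (vsub y b))
         \<le> (1 + 8 * e * (1 + e) / (1 - e)^2) * (vnorm I (vsub x y))^2"
    using h unfolding c8 .
  have C0: "0 \<le> 1 + 8 * e * (1 + e) / (1 - e)^2" using e by simp
  have sq: "(sqrt (1 + 8 * e * (1 + e) / (1 - e)^2) * vnorm I (vsub x y))^2
     = (1 + 8 * e * (1 + e) / (1 - e)^2) * (vnorm I (vsub x y))^2"
    using C0 by (simp only: power_mult_distrib real_sqrt_pow2)
  have "(vnorm I (vsub xr yr))^2 \<le> (sqrt (1 + 8 * e * (1 + e) / (1 - e)^2) * vnorm I (vsub x y))^2"
    unfolding sq using h' r by simp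
  then show "vnorm I (vsub xr yr) \<le> sqrt (1 + 8 * e * (1 + e) / (1 - e)^2) * vnorm I (vsub x y)"
    by (rule sq_le_imp_le) (simp add: vnorm_nonneg C0)
qed



lemma lin_SYM: "lin_closed (setSYM Nx Ny Nz)"
  unfolding lin_closed_def
proof (intro ballI allI)
  fix u z :: cvec and t :: real
  assume u: "u \<in> setSYM Nx Ny Nz" and z: "z \<in> setSYM Nx Ny Nz"
  have V: "\<forall>k. k \<notin> Idx Nx Ny Nz \<longrightarrow> u k + complex_of_real t * z k = 0"
    using u z unfolding setSYM_def Vsp_def by auto
  have S: "\<forall>i j l. (i, j, l) \<in> Idx Nx Ny Nz \<longrightarrow>
      u (i, j, l) + complex_of_real t * z (i, j, l) = u (Nx - i + 1, j, l) + complex_of_real t * z (Nx - i + 1, j, l) \<and>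
      u (i, j, l) + complex_of_real t * z (i, j, l) = - (u (i, Ny - j + 1, l) + complex_of_real t * z (i, Ny - j + 1, l)) \<and>
      u (i, j, l) + complex_of_real t * z (i, j, l) = - (u (i, j, Nz - l + 1) + complex_of_real t * z (i, j, Nz - l + 1))"
  proof (intro allI impI)
    fix i j l assume h: "(i, j, l) \<in> Idx Nx Ny Nz"
    have U1: "u (i, j, l) = u (Nx - i + 1, j, l)" and U2: "u (i, j, l) = - u (i, Ny - j + 1, l)"
      and U3: "u (i, j, l) = - u (i, j, Nz - l + 1)"
      using u h unfolding setSYM_def by blast+
    have Z1: "z (i, j, l) = z (Nx - i + 1, j, l)" and Z2: "z (i, j, l) = - z (i, Ny - j + 1, l)"
      and Z3: "z (i, j, l) = - z (i, j, Nz - l + 1)"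
      using z h unfolding setSYM_def by blast+
    have e1: "u (i, j, l) + complex_of_real t * z (i, j, l) = u (Nx - i + 1, j, l) + complex_of_real t * z (Nx - i + 1, j, l)"
      by (subst U1, subst Z1, rule refl)
    have e2: "u (i, j, l) + complex_of_real t * z (i, j, l) = - (u (i, Ny - j + 1, l) + complex_of_real t * z (i, Ny - j + 1, l))"
      by (subst U2, subst Z2) (simp add: algebra_simps)
    have e3: "u (i, j, l) + complex_of_real t * z (i, j, l) = - (u (i, j, Nz - l + 1) + complex_of_real t * z (i, j, Nz - l + 1))"
      by (subst U3, subst Z3) (simp add: algebra_simps)
    show "u (i, j, l) + complex_of_real t * z (i, j, l) = u (Nx - i + 1, j, l) + complex_of_real t * z (Nx - i + 1, j, l) \<and>
      u (i, j, l) + complex_of_real t * z (i, j, l) = - (u (i, Ny - j + 1, l) + complex_of_real t * z (i, Ny - j + 1, l)) \<and>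
      u (i, j, l) + complex_of_real t * z (i, j, l) = - (u (i, j, Nz - l + 1) + complex_of_real t * z (i, j, Nz - l + 1))"
      using e1 e2 e3 by blast
  qed
  show "(\<lambda>k. u k + complex_of_real t * z k) \<in> setSYM Nx Ny Nz"
    unfolding setSYM_def Vsp_def mem_Collect_eq using V S by blast
qed

lemma lin_SUPP: "lin_closed (setSUPP I \<omega>)"
  unfolding lin_closed_def
proof (intro ballI allI)
  fix u z :: cvec and t :: real
  assume u: "u \<in> setSUPP I \<omega>" and z: "z \<in> setSUPP I \<omega>"
  have V: "\<forall>k. k \<notin> I \<longrightarrow> u k + complex_of_real t * z k = 0"
    using u z unfolding setSUPP_def Vsp_def by auto
  have S: "\<forall>k\<in>I. complex_of_real (\<omega> k) * (u k + complex_of_real t * z k) = u k + complex_of_real t * z k"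
  proof
    fix k assume k: "k \<in> I"
    have U: "complex_of_real (\<omega> k) * u k = u k" using u k unfolding setSUPP_def by blast
    have Z: "complex_of_real (\<omega> k) * z k = z k" using z k unfolding setSUPP_def by blast
    have "complex_of_real (\<omega> k) * (u k + complex_of_real t * z k)
        = complex_of_real (\<omega> k) * u k + complex_of_real t * (complex_of_real (\<omega> k) * z k)"
      by (simp only: distrib_left mult.left_commute)
    also have "\<dots> = u k + complex_of_real t * z k" by (simp only: U Z)
    finally show "complex_of_real (\<omega> k) * (u k + complex_of_real t * z k) = u k + complex_of_real t * z k" .
  qed
  show "(\<lambda>k. u k + complex_of_real t * z k) \<in> setSUPP I \<omega>"
    unfolding setSUPP_def Vsp_def using V S by (simp only: mem_Collect_eq)
qed

lemma dft_lin:
  "dft Nx Ny Nz Mx My Mz (\<lambda>k. u k + complex_of_real t * z k) k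
     = dft Nx Ny Nz Mx My Mz u k + complex_of_real t * dft Nx Ny Nz Mx My Mz z k"
proof (cases k)
  case (fields k1 k2 k3)
  show ?thesis unfolding fields dft_def
    by (simp add: split_def sum.distrib sum_distrib_left algebra_simps)
qed

lemma lin_LF: "lin_closed (setLF I (dft Nx Ny Nz Mx My Mz) Ihat gp B)"
  unfolding lin_closed_def setLF_def Vsp_def
  by (auto simp: dft_lin)

theorem lemma4:
  fixes Nx Ny Nz Mx My Mz s :: nat
    and S :: "idx set" and b :: "idx \<Rightarrow> real"
    and gp :: "idx \<Rightarrow> real^3" and c :: "real^3" and r :: real
    and \<omega> :: "idx \<Rightarrow> real"
    and U2 U5 :: "cvec set" and x2 x5 :: cvec and eps5 :: real
  defines "I \<equiv> Idx Nx Ny Nz"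
    and "F \<equiv> dft Nx Ny Nz Mx My Mz"
    and "A1 \<equiv> setSYM Nx Ny Nz"
    and "A2 \<equiv> setSR (Idx Nx Ny Nz) s"
    and "A3 \<equiv> setSUPP (Idx Nx Ny Nz) \<omega>"
    and "A4 \<equiv> setLF (Idx Nx Ny Nz) (dft Nx Ny Nz Mx My Mz) (Idx Mx My Mz) gp (ball c r)"
    and "A5 \<equiv> setM (Idx Nx Ny Nz) (dft Nx Ny Nz Mx My Mz) S b"
    and "Lam2 \<equiv> proj_inv (Idx Nx Ny Nz) (setSR (Idx Nx Ny Nz) s) (setSR (Idx Nx Ny Nz) s \<inter> U2) \<inter> U2"
    and "Lam5 \<equiv> proj_inv (Idx Nx Ny Nz) (setM (Idx Nx Ny Nz) (dft Nx Ny Nz Mx My Mz) S b)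
                 (setM (Idx Nx Ny Nz) (dft Nx Ny Nz Mx My Mz) S b \<inter> U5) \<inter> U5"
  assumes pos: "0 < Nx" "0 < Ny" "0 < Nz"
    and over: "Nx \<le> Mx" "Ny \<le> My" "Nz \<le> Mz"
    and S_sub: "S \<subseteq> Idx Mx My Mz"
    and b_nonneg: "\<forall>k\<in>S. 0 \<le> b k"
    and \<omega>_binary: "\<forall>k. \<omega> k \<in> {0, 1}"
    and \<omega>_sym: "\<forall>i j l. (i, j, l) \<in> I \<longrightarrow>
          \<omega> (i, j, l) = \<omega> (Nx - i + 1, j, l) \<and>
          \<omega> (i, j, l) = \<omega> (i, Ny - j + 1, l) \<and>
          \<omega> (i, j, l) = \<omega> (i, j, Nz - l + 1)"
    and s_pos: "0 < s"
    and U2: "open_V I U2" "x2 \<in> U2" "x2 \<in> A2"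
    and P2: "\<forall>y\<in>Lam2. pw_almost_afne I (proj I A2) y U2 (1/2) 0"
    and U5: "open_V I U5" "x5 \<in> U5" "x5 \<in> A5"
    and SR5: "super_regular_dist I A5 Lam5 x5 eps5 U5"
  shows
    "(0 \<le> eps5 \<and> eps5 < 4 * sqrt 2 / 7 - 5 / 7 \<longrightarrow>
        (\<forall>y\<in>Vsp I. pw_almost_nonexp I (reflector I A1) y (Vsp I) 0) \<and>
        (\<forall>y\<in>Lam2. pw_almost_nonexp I (reflector I A2) y U2 0) \<and>
        (\<forall>y\<in>Vsp I. pw_almost_nonexp I (reflector I A3) y (Vsp I) 0) \<and>
        (\<forall>y\<in>Vsp I. pw_almost_nonexp I (reflector I A4) y (Vsp I) 0) \<and>
        (\<forall>y\<in>Lam5. pw_almost_nonexp I (reflector I A5) y U5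
                      (8 * eps5 * (1 + eps5) / (1 - eps5)^2)))
   \<and> (0 \<le> eps5 \<and> eps5 < 2 * sqrt 3 / 3 - 1 \<longrightarrow>
        (\<forall>y\<in>Vsp I. pw_almost_afne I (proj I A1) y (Vsp I) (1/2) 0) \<and>
        (\<forall>y\<in>Lam2. pw_almost_afne I (proj I A2) y U2 (1/2) 0) \<and>
        (\<forall>y\<in>Vsp I. pw_almost_afne I (proj I A3) y (Vsp I) (1/2) 0) \<and>
        (\<forall>y\<in>Vsp I. pw_almost_afne I (proj I A4) y (Vsp I) (1/2) 0) \<and>
        (\<forall>y\<in>Lam5. pw_almost_afne I (proj I A5) y U5 (1/2)
                      (4 * eps5 * (1 + eps5) / (1 - eps5)^2)))"
  proof -
  have A5V: "A5 \<subseteq> Vsp I" unfolding A5_def setM_def I_def by blast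
  have L5U: "Lam5 \<subseteq> U5" unfolding Lam5_def by blast
  have L1: "lin_closed A1" unfolding A1_def by (rule lin_SYM)
  have L3: "lin_closed A3" unfolding A3_def by (rule lin_SUPP)
  have L4: "lin_closed A4" unfolding A4_def by (rule lin_LF)
  have R2: "\<forall>y\<in>Lam2. pw_almost_nonexp I (reflector I A2) y U2 0"
    using P2 firm_refl by blast
  show ?thesis
  proof (intro conjI impI)
    assume e: "0 \<le> eps5 \<and> eps5 < 4 * sqrt 2 / 7 - 5 / 7"
    show "\<forall>y\<in>Vsp I. pw_almost_nonexp I (reflector I A1) y (Vsp I) 0"
      using firm_refl[OF subspace_afne[OF L1]] by blast
    show "\<forall>y\<in>Lam2. pw_almost_nonexp I (reflector I A2) y U2 0" by (rule R2)
    show "\<forall>y\<in>Vsp I. pw_almost_nonexp I (reflector I A3) y (Vsp I) 0"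
      using firm_refl[OF subspace_afne[OF L3]] by blast
    show "\<forall>y\<in>Vsp I. pw_almost_nonexp I (reflector I A4) y (Vsp I) 0"
      using firm_refl[OF subspace_afne[OF L4]] by blast
    show "\<forall>y\<in>Lam5. pw_almost_nonexp I (reflector I A5) y U5 (8 * eps5 * (1 + eps5) / (1 - eps5)^2)"
      using sr_refl[OF SR5 _ L5U A5V] e by blast
  next
    assume e: "0 \<le> eps5 \<and> eps5 < 2 * sqrt 3 / 3 - 1"
    show "\<forall>y\<in>Vsp I. pw_almost_afne I (proj I A1) y (Vsp I) (1/2) 0"
      using subspace_afne[OF L1] by blast
    show "\<forall>y\<in>Lam2. pw_almost_afne I (proj I A2) y U2 (1/2) 0" by (rule P2)
    show "\<forall>y\<in>Vsp I. pw_almost_afne I (proj I A3) y (Vsp I) (1/2) 0"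
      using subspace_afne[OF L3] by blast
    show "\<forall>y\<in>Vsp I. pw_almost_afne I (proj I A4) y (Vsp I) (1/2) 0"
      using subspace_afne[OF L4] by blast
    show "\<forall>y\<in>Lam5. pw_almost_afne I (proj I A5) y U5 (1/2) (4 * eps5 * (1 + eps5) / (1 - eps5)^2)"
      using sr_afne[OF SR5 _ L5U A5V] e by blast
  qed
qed

end
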